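(* Let $\Phi^t:X\to X$, $t\in\mathbb{R}$, be a $C^1$ flow on a manifold $X$ with a Borel ergodic invariant probability measure $\mu$ of compact support; let $Y$ be a compact metric space with finite Borel measure $\nu$, $H_Y=L^2(Y,\nu)$; let $\vec F:X\to H_Y$ be a continuous observation map in $L^2(X,\mu;H_Y)$ and write $F_y(x)=\vec F(x)(y)$. Let $\Omega=X\times Y$, $\rho=\mu\times\nu$, $H_\Omega=L^2(\Omega,\rho)$. Fix $\tau>0$ and let $\tilde F_Q(x,y)=(F_y(x),F_y(\Phi^{-\tau}x),\ldots,F_y(\Phi^{-(Q-1)\tau}x))\in\mathbb{R}^Q$. Let $(k_Q)_{Q\in\mathbb{N}}$ be kernels on $\Omega\times\Omega$ such that (i) $k_Q(\omega,\omega')=\tilde k_Q(\tilde F_Q(\omega),\tilde F_Q(\omega'))$ for a continuous $\tilde k_Q:\mathbb{R}^Q\times\mathbb{R}^Q\to\mathbb{R}$; (ii) $k_Q$ converges in $H_\Omega\otimes H_\Omega\cong L^2(\Omega\times\Omega,\rho\times\rho)$ to some $k_\infty\in H_\Omega\otimes H_\Omega$; (iii) for all $t\in\mathbb{R}$ and $\rho\times\rho$-a.e. $((x,y),(x',y'))$, $k_\infty((\Phi^t(x),y),(\Phi^t(x'),y'))=k_\infty((x,y),(x',y'))$. Let $K_Q,K_\infty:H_\Omega\to H_\Omega$ be the integral operators $K f(\omega)=\int_\Omega k(\omega,\omega')f(\omega')\,d\rho(\omega')$ with kernels $k_Q$, $k_\infty$ respectively, and let $\tilde U^t f=f\circ(\Phi^t\times\mathrm{id}_Y)$.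 Then $K_Q\to K_\infty$ in operator norm as $Q\to\infty$ (and hence in spectrum), and $K_\infty\tilde U^t=\tilde U^tK_\infty$ for all $t\in\mathbb{R}$. *)

theory Defs
  imports "HOL-Probability.Probability"
begin

definition is_flow :: "(real \<Rightarrow> 'a::topological_space \<Rightarrow> 'a) \<Rightarrow> bool" where
  "is_flow \<Phi> \<longleftrightarrow> (\<forall>x. \<Phi> 0 x = x) \<and> (\<forall>s t x. \<Phi> (s + t) x = \<Phi> s (\<Phi> t x))
      \<and> continuous_on UNIV (\<lambda>(t, x). \<Phi> t x)"

definition measure_support :: "'a::topological_space measure \<Rightarrow> 'a set" where
  "measure_support M = {x. \<forall>U. open U \<and> x \<in> U \<longrightarrow> emeasure M U > 0}"

definition flow_invariant :: "'a measure \<Rightarrow> (real \<Rightarrow> 'a \<Rightarrow> 'a) \<Rightarrow> bool" where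
  "flow_invariant M \<Phi> \<longleftrightarrow> (\<forall>t. \<Phi> t \<in> M \<rightarrow>\<^sub>M M \<and> distr M M (\<Phi> t) = M)"

definition flow_ergodic :: "'a measure \<Rightarrow> (real \<Rightarrow> 'a \<Rightarrow> 'a) \<Rightarrow> bool" where
  "flow_ergodic M \<Phi> \<longleftrightarrow> (\<forall>A \<in> sets M. (\<forall>t. \<Phi> t -` A \<inter> space M = A)
      \<longrightarrow> measure M A = 0 \<or> measure M A = 1)"

definition L2 :: "'a measure \<Rightarrow> ('a \<Rightarrow> real) \<Rightarrow> bool" where
  "L2 M f \<longleftrightarrow> f \<in> borel_measurable M \<and> integrable M (\<lambda>x. (f x)\<^sup>2)"

definition L2_continuous :: "'b measure \<Rightarrow> ('a::metric_space \<Rightarrow> 'b \<Rightarrow> real) \<Rightarrow> bool" where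
  "L2_continuous N F \<longleftrightarrow> (\<forall>x. \<forall>e>0. \<exists>d>0. \<forall>x'. dist x' x < d \<longrightarrow>
      (\<integral>y. (F x' y - F x y)\<^sup>2 \<partial>N) < e)"

text \<open>R^Q embedded in nat => real as vectors vanishing from index Q on.\<close>
definition fin_vecs :: "nat \<Rightarrow> (nat \<Rightarrow> real) set" where
  "fin_vecs Q = {v. \<forall>i\<ge>Q. v i = 0}"

definition delay_map :: "(real \<Rightarrow> 'a \<Rightarrow> 'a) \<Rightarrow> real \<Rightarrow> ('a \<Rightarrow> 'b \<Rightarrow> real) \<Rightarrow> nat
    \<Rightarrow> 'a \<times> 'b \<Rightarrow> (nat \<Rightarrow> real)" where
  "delay_map \<Phi> \<tau> F Q = (\<lambda>(x, y). \<lambda>i. if i < Q then F (\<Phi> (- (real i * \<tau>)) x) y else 0)"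

definition int_op :: "'a measure \<Rightarrow> ('a \<Rightarrow> 'a \<Rightarrow> real) \<Rightarrow> ('a \<Rightarrow> real) \<Rightarrow> 'a \<Rightarrow> real" where
  "int_op M k f = (\<lambda>w. \<integral>w'. k w w' * f w' \<partial>M)"

definition op_dist_sq :: "'a measure \<Rightarrow> ('a \<Rightarrow> 'a \<Rightarrow> real) \<Rightarrow> ('a \<Rightarrow> 'a \<Rightarrow> real) \<Rightarrow> ennreal" where
  "op_dist_sq M k1 k2 = (SUP f \<in> {f. f \<in> borel_measurable M \<and> (\<integral>\<^sup>+ w. ennreal ((f w)\<^sup>2) \<partial>M) \<le> 1}.
      \<integral>\<^sup>+ w. ennreal ((int_op M k1 f w - int_op M k2 f w)\<^sup>2) \<partial>M)"

definition koopman :: "(real \<Rightarrow> 'a \<Rightarrow> 'a) \<Rightarrow> real \<Rightarrow> ('a \<times> 'b \<Rightarrow> real) \<Rightarrow> 'a \<times> 'b \<Rightarrow> real" where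
  "koopman \<Phi> t f = (\<lambda>(x, y). f (\<Phi> t x, y))"

end

theory Submission
  imports Defs
begin

lemma CS_real:
  fixes f g :: "'c \<Rightarrow> real"
  assumes [measurable]: "f \<in> borel_measurable M" "g \<in> borel_measurable M"
  shows "(\<integral>\<^sup>+x. ennreal \<bar>f x * g x\<bar> \<partial>M)\<^sup>2 \<le> (\<integral>\<^sup>+x. ennreal ((f x)\<^sup>2) \<partial>M) * (\<integral>\<^sup>+x. ennreal ((g x)\<^sup>2) \<partial>M)"
proof -
  have "(\<integral>\<^sup>+x. ennreal \<bar>f x\<bar> * ennreal \<bar>g x\<bar> \<partial>M)\<^sup>2 \<le> (\<integral>\<^sup>+x. ennreal \<bar>f x\<bar> ^ 2 \<partial>M) * (\<integral>\<^sup>+x. ennreal \<bar>g x\<bar> ^ 2 \<partial>M)"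
    by (rule Cauchy_Schwarz_nn_integral) auto
  moreover have "\<And>x. ennreal \<bar>f x\<bar> * ennreal \<bar>g x\<bar> = ennreal \<bar>f x * g x\<bar>"
    by (simp add: ennreal_mult' abs_mult)
  moreover have "\<And>x. ennreal \<bar>f x\<bar> ^ 2 = ennreal ((f x)\<^sup>2)" "\<And>x. ennreal \<bar>g x\<bar> ^ 2 = ennreal ((g x)\<^sup>2)"
    by (subst ennreal_power; simp)+
  ultimately show ?thesis by simp
qed

lemma CS_int:
  fixes f g :: "'c \<Rightarrow> real"
  assumes [measurable]: "f \<in> borel_measurable M" "g \<in> borel_measurable M"
    and ff: "(\<integral>\<^sup>+x. ennreal ((f x)\<^sup>2) \<partial>M) < \<infinity>" and gf: "(\<integral>\<^sup>+x. ennreal ((g x)\<^sup>2) \<partial>M) < \<infinity>"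
  shows "integrable M (\<lambda>x. f x * g x)"
    and "ennreal ((\<integral>x. f x * g x \<partial>M)\<^sup>2) \<le> (\<integral>\<^sup>+x. ennreal ((f x)\<^sup>2) \<partial>M) * (\<integral>\<^sup>+x. ennreal ((g x)\<^sup>2) \<partial>M)"
proof -
  have cs: "(\<integral>\<^sup>+x. ennreal \<bar>f x * g x\<bar> \<partial>M)\<^sup>2 \<le> (\<integral>\<^sup>+x. ennreal ((f x)\<^sup>2) \<partial>M) * (\<integral>\<^sup>+x. ennreal ((g x)\<^sup>2) \<partial>M)"
    by (rule CS_real) auto
  have "(\<integral>\<^sup>+x. ennreal ((f x)\<^sup>2) \<partial>M) * (\<integral>\<^sup>+x. ennreal ((g x)\<^sup>2) \<partial>M) < \<infinity>"
    using ff gf by (simp add: ennreal_mult_less_top)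
  with cs have "(\<integral>\<^sup>+x. ennreal \<bar>f x * g x\<bar> \<partial>M)\<^sup>2 < \<infinity>" by (rule le_less_trans)
  then have fin: "(\<integral>\<^sup>+x. ennreal \<bar>f x * g x\<bar> \<partial>M) < \<infinity>"
    by (simp add: power_less_top_ennreal)
  show int: "integrable M (\<lambda>x. f x * g x)"
    by (rule integrableI_bounded) (use fin in auto)
  have "\<bar>\<integral>x. f x * g x \<partial>M\<bar> \<le> (\<integral>x. \<bar>f x * g x\<bar> \<partial>M)"
    by (rule integral_abs_bound)
  then have "(\<integral>x. f x * g x \<partial>M)\<^sup>2 \<le> (\<integral>x. \<bar>f x * g x\<bar> \<partial>M)\<^sup>2"
    by (metis abs_ge_zero power2_abs power_mono)
  then have "ennreal ((\<integral>x. f x * g x \<partial>M)\<^sup>2) \<le> ennreal ((\<integral>x. \<bar>f x * g x\<bar> \<partial>M)\<^sup>2)"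
    by (rule ennreal_leI)
  also have "\<dots> = (ennreal (\<integral>x. \<bar>f x * g x\<bar> \<partial>M))\<^sup>2"
    by (simp add: ennreal_power)
  also have "ennreal (\<integral>x. \<bar>f x * g x\<bar> \<partial>M) = (\<integral>\<^sup>+x. ennreal \<bar>f x * g x\<bar> \<partial>M)"
    by (rule nn_integral_eq_integral[symmetric]) (use int in auto)
  finally show "ennreal ((\<integral>x. f x * g x \<partial>M)\<^sup>2) \<le> (\<integral>\<^sup>+x. ennreal ((f x)\<^sup>2) \<partial>M) * (\<integral>\<^sup>+x. ennreal ((g x)\<^sup>2) \<partial>M)"
    using cs by simp
qed

lemma sq_diff_le: "(a - b)\<^sup>2 \<le> 2 * a\<^sup>2 + 2 * (b::real)\<^sup>2"
proof -
  have "0 \<le> (a + b)\<^sup>2" by simp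
  then show ?thesis unfolding power2_sum power2_diff by linarith
qed

lemma L2_sq_diff:
  fixes a b :: "'c \<Rightarrow> real"
  assumes "L2 N a" "L2 N b"
  shows "integrable N (\<lambda>x. (a x - b x)\<^sup>2)"
proof -
  have [measurable]: "a \<in> borel_measurable N" "b \<in> borel_measurable N"
    using assms by (auto simp: L2_def)
  have "integrable N (\<lambda>x. 2 * (a x)\<^sup>2 + 2 * (b x)\<^sup>2)"
    using assms by (auto simp: L2_def)
  then show ?thesis
  proof (rule Bochner_Integration.integrable_bound)
    show "AE x in N. norm ((a x - b x)\<^sup>2) \<le> norm (2 * (a x)\<^sup>2 + 2 * (b x)\<^sup>2)"
      by (intro AE_I2) (simp add: sq_diff_le)
  qed measurable
qed

lemma HS_bound:
  fixes M :: "'c measure" and k1 k2 :: "'c \<Rightarrow> 'c \<Rightarrow> real"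
  assumes sf: "sigma_finite_measure M"
    and L1: "L2 (M \<Otimes>\<^sub>M M) (\<lambda>(w, w'). k1 w w')"
    and L2': "L2 (M \<Otimes>\<^sub>M M) (\<lambda>(w, w'). k2 w w')"
  shows "op_dist_sq M k1 k2 \<le> ennreal (\<integral>(w, w'). (k1 w w' - k2 w w')\<^sup>2 \<partial>(M \<Otimes>\<^sub>M M))"
proof -
  interpret M: sigma_finite_measure M by (rule sf)
  interpret MM: pair_sigma_finite M M by unfold_locales
  have m1[measurable]: "(\<lambda>(w, w'). k1 w w') \<in> borel_measurable (M \<Otimes>\<^sub>M M)"
    and m2[measurable]: "(\<lambda>(w, w'). k2 w w') \<in> borel_measurable (M \<Otimes>\<^sub>M M)"
    using L1 L2' by (auto simp: L2_def)
  have mw1[measurable]: "(\<lambda>w'. k1 w w') \<in> borel_measurable M" if "w \<in> space M" for w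
    using measurable_Pair2[OF m1 that] by simp
  have mw2[measurable]: "(\<lambda>w'. k2 w w') \<in> borel_measurable M" if "w \<in> space M" for w
    using measurable_Pair2[OF m2 that] by simp
  have intD: "integrable (M \<Otimes>\<^sub>M M) (\<lambda>(w, w'). (k1 w w' - k2 w w')\<^sup>2)"
    using L2_sq_diff[OF L1 L2'] by (simp add: case_prod_beta')
  have fin: "AE w in M. (\<integral>\<^sup>+w'. ennreal ((k w w')\<^sup>2) \<partial>M) \<noteq> \<infinity>"
    if Lk: "L2 (M \<Otimes>\<^sub>M M) (\<lambda>(w, w'). k w w')" for k
  proof -
    have mk[measurable]: "(\<lambda>(w, w'). k w w') \<in> borel_measurable (M \<Otimes>\<^sub>M M)"
      using Lk by (auto simp: L2_def)
    have ik: "integrable (M \<Otimes>\<^sub>M M) (\<lambda>p. (case p of (w, w') \<Rightarrow> k w w')\<^sup>2)"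
      using Lk by (auto simp: L2_def)
    have "(\<integral>\<^sup>+w. \<integral>\<^sup>+w'. ennreal ((k w w')\<^sup>2) \<partial>M \<partial>M)
        = (\<integral>\<^sup>+p. ennreal ((case p of (w, w') \<Rightarrow> k w w')\<^sup>2) \<partial>(M \<Otimes>\<^sub>M M))"
      using M.nn_integral_fst[of "\<lambda>p. ennreal ((case p of (w, w') \<Rightarrow> k w w')\<^sup>2)" M]
      by simp
    also have "\<dots> = ennreal (\<integral>p. (case p of (w, w') \<Rightarrow> k w w')\<^sup>2 \<partial>(M \<Otimes>\<^sub>M M))"
      by (rule nn_integral_eq_integral[OF ik]) auto
    finally have "(\<integral>\<^sup>+w. \<integral>\<^sup>+w'. ennreal ((k w w')\<^sup>2) \<partial>M \<partial>M) \<noteq> \<infinity>" by simp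
    then show ?thesis
      by (intro nn_integral_PInf_AE) (auto intro!: M.borel_measurable_nn_integral_fst[of "\<lambda>p. ennreal ((case p of (w, w') \<Rightarrow> k w w')\<^sup>2)" M, simplified])
  qed
  show ?thesis
    unfolding op_dist_sq_def
  proof (rule SUP_least, clarsimp)
    fix f assume fm[measurable]: "f \<in> borel_measurable M"
      and f1: "(\<integral>\<^sup>+w. ennreal ((f w)\<^sup>2) \<partial>M) \<le> 1"
    have ff: "(\<integral>\<^sup>+w. ennreal ((f w)\<^sup>2) \<partial>M) < \<infinity>" using f1
      using order.strict_trans1[OF f1] by simp
    have pt: "ennreal ((int_op M k1 f w - int_op M k2 f w)\<^sup>2)
        \<le> (\<integral>\<^sup>+w'. ennreal ((k1 w w' - k2 w w')\<^sup>2) \<partial>M)"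
      if w: "w \<in> space M" and fin1: "(\<integral>\<^sup>+w'. ennreal ((k1 w w')\<^sup>2) \<partial>M) \<noteq> \<infinity>"
        and fin2: "(\<integral>\<^sup>+w'. ennreal ((k2 w w')\<^sup>2) \<partial>M) \<noteq> \<infinity>" for w
    proof -
      have i1: "integrable M (\<lambda>w'. k1 w w' * f w')"
        by (rule CS_int(1)[OF mw1[OF w] fm _ ff]) (use fin1 in \<open>simp add: top.not_eq_extremum\<close>)
      have i2: "integrable M (\<lambda>w'. k2 w w' * f w')"
        by (rule CS_int(1)[OF mw2[OF w] fm _ ff]) (use fin2 in \<open>simp add: top.not_eq_extremum\<close>)
      have "int_op M k1 f w - int_op M k2 f w = (\<integral>w'. (k1 w w' - k2 w w') * f w' \<partial>M)"
        unfolding int_op_def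
        by (subst Bochner_Integration.integral_diff[OF i1 i2, symmetric]) (simp add: algebra_simps)
      moreover have "(\<integral>\<^sup>+w'. ennreal ((k1 w w' - k2 w w')\<^sup>2) \<partial>M) < \<infinity>"
      proof -
        have "(\<integral>\<^sup>+w'. ennreal ((k1 w w' - k2 w w')\<^sup>2) \<partial>M)
           \<le> (\<integral>\<^sup>+w'. ennreal 2 * ennreal ((k1 w w')\<^sup>2) + ennreal 2 * ennreal ((k2 w w')\<^sup>2) \<partial>M)"
        proof (rule nn_integral_mono)
          fix x
          have sq: "(k1 w x - k2 w x)\<^sup>2 \<le> 2 * (k1 w x)\<^sup>2 + 2 * (k2 w x)\<^sup>2"
            by (rule sq_diff_le)
          have eq: "ennreal 2 * ennreal ((k1 w x)\<^sup>2) + ennreal 2 * ennreal ((k2 w x)\<^sup>2) = ennreal (2 * (k1 w x)\<^sup>2 + 2 * (k2 w x)\<^sup>2)"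
            by (simp add: ennreal_plus ennreal_mult del: ennreal_numeral)
          show "ennreal ((k1 w x - k2 w x)\<^sup>2) \<le> ennreal 2 * ennreal ((k1 w x)\<^sup>2) + ennreal 2 * ennreal ((k2 w x)\<^sup>2)"
            unfolding eq by (rule ennreal_leI[OF sq])
        qed
        also have "\<dots> = ennreal 2 * (\<integral>\<^sup>+w'. ennreal ((k1 w w')\<^sup>2) \<partial>M) + ennreal 2 * (\<integral>\<^sup>+w'. ennreal ((k2 w w')\<^sup>2) \<partial>M)"
          using w by (simp add: nn_integral_add nn_integral_cmult)
        also have "\<dots> < \<infinity>" using fin1 fin2
          by (simp add: ennreal_mult_less_top top.not_eq_extremum)
        finally show ?thesis .
      qed
      moreover have "(\<lambda>w'. k1 w w' - k2 w w') \<in> borel_measurable M"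
        using mw1[OF w] mw2[OF w] by (rule borel_measurable_diff)
      ultimately have "ennreal ((int_op M k1 f w - int_op M k2 f w)\<^sup>2)
          \<le> (\<integral>\<^sup>+w'. ennreal ((k1 w w' - k2 w w')\<^sup>2) \<partial>M) * (\<integral>\<^sup>+w. ennreal ((f w)\<^sup>2) \<partial>M)"
        using CS_int(2)[of "\<lambda>w'. k1 w w' - k2 w w'" M f, OF _ fm _ ff] by simp
      also have "\<dots> \<le> (\<integral>\<^sup>+w'. ennreal ((k1 w w' - k2 w w')\<^sup>2) \<partial>M) * 1"
        by (rule mult_left_mono[OF f1]) simp
      finally show ?thesis by simp
    qed
    have "(\<integral>\<^sup>+w. ennreal ((int_op M k1 f w - int_op M k2 f w)\<^sup>2) \<partial>M)
        \<le> (\<integral>\<^sup>+w. \<integral>\<^sup>+w'. ennreal ((k1 w w' - k2 w w')\<^sup>2) \<partial>M \<partial>M)"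
    proof (rule nn_integral_mono_AE)
      show "AE w in M. ennreal ((int_op M k1 f w - int_op M k2 f w)\<^sup>2)
        \<le> (\<integral>\<^sup>+w'. ennreal ((k1 w w' - k2 w w')\<^sup>2) \<partial>M)"
        using AE_space fin[OF L1] fin[OF L2'] by eventually_elim (rule pt)
    qed
    also have "\<dots> = (\<integral>\<^sup>+p. ennreal ((case p of (w, w') \<Rightarrow> (k1 w w' - k2 w w')\<^sup>2)) \<partial>(M \<Otimes>\<^sub>M M))"
      using M.nn_integral_fst[of "\<lambda>p. ennreal ((case p of (w, w') \<Rightarrow> (k1 w w' - k2 w w')\<^sup>2))" M]
      by simp
    also have "\<dots> = ennreal (\<integral>(w, w'). (k1 w w' - k2 w w')\<^sup>2 \<partial>(M \<Otimes>\<^sub>M M))"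
      by (rule nn_integral_eq_integral[OF intD]) auto
    finally show "(\<integral>\<^sup>+w. ennreal ((int_op M k1 f w - int_op M k2 f w)\<^sup>2) \<partial>M)
        \<le> ennreal (\<integral>(w, w'). (k1 w w' - k2 w w')\<^sup>2 \<partial>(M \<Otimes>\<^sub>M M))" .
  qed
qed

theorem theorem2:
  fixes \<Phi> :: "real \<Rightarrow> 'a::{metric_space, second_countable_topology} \<Rightarrow> 'a"
    and \<mu> :: "'a measure"
    and \<nu> :: "'b::metric_space measure"
    and F :: "'a \<Rightarrow> 'b \<Rightarrow> real"
    and \<tau> :: real
    and kt :: "nat \<Rightarrow> (nat \<Rightarrow> real) \<Rightarrow> (nat \<Rightarrow> real) \<Rightarrow> real"
    and k :: "nat \<Rightarrow> 'a \<times> 'b \<Rightarrow> 'a \<times> 'b \<Rightarrow> real"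
    and k_inf :: "'a \<times> 'b \<Rightarrow> 'a \<times> 'b \<Rightarrow> real"
  assumes flow: "is_flow \<Phi>"
    and mu_borel: "sets \<mu> = sets borel"
    and mu_prob: "prob_space \<mu>"
    and mu_inv: "flow_invariant \<mu> \<Phi>"
    and mu_erg: "flow_ergodic \<mu> \<Phi>"
    and mu_supp: "compact (measure_support \<mu>)"
    and Y_compact: "compact (UNIV :: 'b set)"
    and nu_borel: "sets \<nu> = sets borel"
    and nu_fin: "finite_measure \<nu>"
    and F_L2Y: "\<And>x. L2 \<nu> (F x)"
    and F_cont: "L2_continuous \<nu> F"
    and F_L2: "L2 (\<mu> \<Otimes>\<^sub>M \<nu>) (\<lambda>(x, y). F x y)"
    and tau_pos: "\<tau> > 0"
    and kt_cont: "\<And>Q. continuous_on (fin_vecs Q \<times> fin_vecs Q) (\<lambda>(u, v). kt Q u v)"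
    and k_def: "\<And>Q w w'. k Q w w' = kt Q (delay_map \<Phi> \<tau> F Q w) (delay_map \<Phi> \<tau> F Q w')"
    and k_L2: "\<And>Q. L2 ((\<mu> \<Otimes>\<^sub>M \<nu>) \<Otimes>\<^sub>M (\<mu> \<Otimes>\<^sub>M \<nu>)) (\<lambda>(w, w'). k Q w w')"
    and k_inf_L2: "L2 ((\<mu> \<Otimes>\<^sub>M \<nu>) \<Otimes>\<^sub>M (\<mu> \<Otimes>\<^sub>M \<nu>)) (\<lambda>(w, w'). k_inf w w')"
    and k_conv: "(\<lambda>Q. \<integral>(w, w'). (k Q w w' - k_inf w w')\<^sup>2 \<partial>((\<mu> \<Otimes>\<^sub>M \<nu>) \<Otimes>\<^sub>M (\<mu> \<Otimes>\<^sub>M \<nu>)))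
                  \<longlonglongrightarrow> 0"
    and k_inf_inv: "\<And>t. AE ((x, y), (x', y')) in (\<mu> \<Otimes>\<^sub>M \<nu>) \<Otimes>\<^sub>M (\<mu> \<Otimes>\<^sub>M \<nu>).
                  k_inf (\<Phi> t x, y) (\<Phi> t x', y') = k_inf (x, y) (x', y')"
  shows "(\<lambda>Q. op_dist_sq (\<mu> \<Otimes>\<^sub>M \<nu>) (k Q) k_inf) \<longlonglongrightarrow> 0
    \<and> (\<forall>t f. L2 (\<mu> \<Otimes>\<^sub>M \<nu>) f \<longrightarrow>
         (AE w in \<mu> \<Otimes>\<^sub>M \<nu>. int_op (\<mu> \<Otimes>\<^sub>M \<nu>) k_inf (koopman \<Phi> t f) w
                            = koopman \<Phi> t (int_op (\<mu> \<Otimes>\<^sub>M \<nu>) k_inf f) w))"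
  proof -
  let ?M = "\<mu> \<Otimes>\<^sub>M \<nu>"
  interpret mu: prob_space \<mu> by (rule mu_prob)
  interpret nu: finite_measure \<nu> by (rule nu_fin)
  interpret mn: pair_sigma_finite \<mu> \<nu> by unfold_locales
  have spmu: "space \<mu> = UNIV" using sets_eq_imp_space_eq[OF mu_borel] by simp
  have spnu: "space \<nu> = UNIV" using sets_eq_imp_space_eq[OF nu_borel] by simp
  have finM: "finite_measure ?M"
    by (rule finite_measure_pair_measure) (auto intro: nu_fin mu.finite_measure_axioms)
  interpret M: finite_measure ?M by (rule finM)
  interpret MM: pair_sigma_finite ?M ?M by unfold_locales
  have part1: "(\<lambda>Q. op_dist_sq ?M (k Q) k_inf) \<longlonglongrightarrow> 0"
  proof (rule tendsto_sandwich[where f="\<lambda>_. 0"])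
    show "\<forall>\<^sub>F Q in sequentially. 0 \<le> op_dist_sq ?M (k Q) k_inf" by simp
    show "\<forall>\<^sub>F Q in sequentially. op_dist_sq ?M (k Q) k_inf
        \<le> ennreal (\<integral>(w, w'). (k Q w w' - k_inf w w')\<^sup>2 \<partial>(?M \<Otimes>\<^sub>M ?M))"
      by (intro always_eventually allI HS_bound k_L2 k_inf_L2) (use finM in \<open>simp add: finite_measure_def\<close>)
    show "(\<lambda>_. 0::ennreal) \<longlonglongrightarrow> 0" by simp
    show "(\<lambda>Q. ennreal (\<integral>(w, w'). (k Q w w' - k_inf w w')\<^sup>2 \<partial>(?M \<Otimes>\<^sub>M ?M))) \<longlonglongrightarrow> 0"
      using tendsto_ennrealI[OF k_conv] by simp
  qed
  have part2: "AE w in ?M. int_op ?M k_inf (koopman \<Phi> t f) w = koopman \<Phi> t (int_op ?M k_inf f) w"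
    if fL: "L2 ?M f" for t f
  proof -
    define T where "T = (\<lambda>(x::'a, y::'b). (\<Phi> t x, y))"
    have fm[measurable]: "f \<in> borel_measurable ?M" using fL by (simp add: L2_def)
    have Phim[measurable]: "\<Phi> t \<in> \<mu> \<rightarrow>\<^sub>M \<mu>" and Phid: "distr \<mu> \<mu> (\<Phi> t) = \<mu>"
      using mu_inv by (auto simp: flow_invariant_def)
    have Tm[measurable]: "T \<in> ?M \<rightarrow>\<^sub>M ?M"
      unfolding T_def by measurable
    have Td: "distr ?M ?M T = ?M"
    proof -
      have "distr \<mu> \<mu> (\<Phi> t) \<Otimes>\<^sub>M distr \<nu> \<nu> id = distr ?M ?M (\<lambda>(x, y). (\<Phi> t x, id y))"
        by (rule pair_measure_distr) (use nu_fin in \<open>auto simp: id_def distr_id finite_measure_def\<close>)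
      then show ?thesis by (simp add: Phid id_def distr_id T_def)
    qed
    have km[measurable]: "(\<lambda>(w, w'). k_inf w w') \<in> borel_measurable (?M \<Otimes>\<^sub>M ?M)"
      using k_inf_L2 by (simp add: L2_def)
    have kw[measurable]: "(\<lambda>w'. k_inf w w') \<in> borel_measurable ?M" for w
      using measurable_Pair2[OF km, of w] by (simp add: space_pair_measure spmu spnu)
    have inv: "AE w in ?M. AE w' in ?M. k_inf (T w) (T w') = k_inf w w'"
    proof -
      have "AE p in ?M \<Otimes>\<^sub>M ?M. k_inf (T (fst p)) (T (snd p)) = k_inf (fst p) (snd p)"
        using k_inf_inv[of t] by eventually_elim (auto simp: T_def split: prod.splits)
      from MM.AE_pair[OF this] show ?thesis by simp
    qed
    show ?thesis
      using inv
    proof eventually_elim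
      case (elim w)
      have "koopman \<Phi> t (int_op ?M k_inf f) w = (\<integral>w'. k_inf (T w) w' * f w' \<partial>?M)"
        by (simp add: koopman_def int_op_def T_def split: prod.splits)
      also have "\<dots> = (\<integral>w'. k_inf (T w) w' * f w' \<partial>(distr ?M ?M T))"
        by (simp add: Td)
      also have "\<dots> = (\<integral>w'. k_inf (T w) (T w') * f (T w') \<partial>?M)"
        by (rule integral_distr[OF Tm]) measurable
      also have "\<dots> = (\<integral>w'. k_inf w w' * f (T w') \<partial>?M)"
        by (rule integral_cong_AE) (use elim in \<open>auto elim!: eventually_mono\<close>)
      also have "\<dots> = int_op ?M k_inf (koopman \<Phi> t f) w"
        by (simp add: koopman_def int_op_def T_def case_prod_beta')
      finally show ?case by simp
    qed
  qed
  show ?thesis using part1 part2 by blast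
qed

end
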